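(* Let $N\ge1$ be an integer, $d>0$, $T>0$, and $0\le s_1\le\dots\le s_N$. Let $x^*$ be the optimal solution of the (assumed feasible) problem $$\min_{x\in\mathbb{R}^{N+1}}\ \sum_{i=1}^{N+1}x_i^2$$ subject to - $\sum_{i=1}^k x_i\ge s_k+kd$ for $1\le k\le N$, - $x_i\ge 2d$ for $2\le i\le N$, - $x_{N+1}\ge d$, - $\sum_{i=1}^{N+1}x_i=T+Nd$. Then $x_N^*\ge x_{N+1}^*$. Moreover, $x_N^*>x_{N+1}^*$ only if at least one of the following holds: (1) $\sum_{i=1}^N x_i^*=s_N+Nd$, or (2) $x_N^*=2d$.
   Context: The problem arises from age-of-information minimization for a single energy harvesting transmitter with energy arrival times $s_k$, fixed service time $d$, and session length $T$. Its objective is strictly convex, so the optimal solution is unique. *)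

theory Defs
  imports Complex_Main
begin

text \<open>Vectors x in R^(N+1) are represented as functions nat => real, using indices 1..N+1.\<close>

definition aoi_feasible :: "nat \<Rightarrow> real \<Rightarrow> real \<Rightarrow> (nat \<Rightarrow> real) \<Rightarrow> (nat \<Rightarrow> real) \<Rightarrow> bool" where
  "aoi_feasible N d T s x \<longleftrightarrow>
     (\<forall>k\<in>{1..N}. (\<Sum>i=1..k. x i) \<ge> s k + real k * d) \<and>
     (\<forall>i\<in>{2..N}. x i \<ge> 2 * d) \<and>
     x (N + 1) \<ge> d \<and>
     (\<Sum>i=1..N+1. x i) = T + real N * d"

definition aoi_objective :: "nat \<Rightarrow> (nat \<Rightarrow> real) \<Rightarrow> real" where
  "aoi_objective N x = (\<Sum>i=1..N+1. (x i)\<^sup>2)"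

definition aoi_optimal :: "nat \<Rightarrow> real \<Rightarrow> real \<Rightarrow> (nat \<Rightarrow> real) \<Rightarrow> (nat \<Rightarrow> real) \<Rightarrow> bool" where
  "aoi_optimal N d T s x \<longleftrightarrow> aoi_feasible N d T s x \<and>
     (\<forall>y. aoi_feasible N d T s y \<longrightarrow> aoi_objective N x \<le> aoi_objective N y)"

end

theory Submission
  imports Defs
begin

lemma sum_last:
  fixes N :: nat
  assumes "N \<ge> 1"
  shows "(\<Sum>i=1..N. f i) = (\<Sum>i=1..N-1. f i) + (f N :: real)"
proof -
  obtain m where "N = Suc m" using assms by (cases N) auto
  then show ?thesis using sum.cl_ivl_Suc[of f 1 m] by auto
qed

lemma perturb:
  fixes x :: "nat \<Rightarrow> real"
  assumes N1: "N \<ge> 1" and F: "aoi_feasible N d T s x"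
    and ab: "a + b = x N + x (N+1)" and bd: "b \<ge> d"
    and a2: "N \<ge> 2 \<longrightarrow> a \<ge> 2 * d"
    and pre: "(\<Sum>i=1..N-1. x i) + a \<ge> s N + real N * d"
  shows "aoi_feasible N d T s (x(N:=a, N+1:=b)) \<and>
         aoi_objective N (x(N:=a, N+1:=b)) = aoi_objective N x - (x N)\<^sup>2 - (x (N+1))\<^sup>2 + a\<^sup>2 + b\<^sup>2"
proof -
  define y where "y = x(N:=a, N+1:=b)"
  have eqlow: "(\<Sum>i=1..k. g (y i)) = (\<Sum>i=1..k. g (x i))" if "k < N" for k and g :: "real \<Rightarrow> real"
    by (rule sum.cong) (use that in \<open>auto simp: y_def\<close>)
  have sN: "(\<Sum>i=1..N. g (y i)) = (\<Sum>i=1..N-1. g (x i)) + g a" for g :: "real \<Rightarrow> real"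
    using sum_last[OF N1, of "\<lambda>i. g (y i)"] eqlow[of "N-1" g] N1 by (simp add: y_def)
  have sNx: "(\<Sum>i=1..N. g (x i)) = (\<Sum>i=1..N-1. g (x i)) + g (x N)" for g :: "real \<Rightarrow> real"
    using sum_last[OF N1, of "\<lambda>i. g (x i)"] by simp
  have sM: "(\<Sum>i=1..N+1. g (y i)) = (\<Sum>i=1..N-1. g (x i)) + g a + g b" for g :: "real \<Rightarrow> real"
    using sN[of g] by (simp add: y_def)
  have sMx: "(\<Sum>i=1..N+1. g (x i)) = (\<Sum>i=1..N-1. g (x i)) + g (x N) + g (x (N+1))" for g :: "real \<Rightarrow> real"
    using sNx[of g] by simp
  have feas: "aoi_feasible N d T s y"
    unfolding aoi_feasible_def
  proof (intro conjI ballI)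
    fix k assume k: "k \<in> {1..N}"
    show "(\<Sum>i=1..k. y i) \<ge> s k + real k * d"
    proof (cases "k < N")
      case True
      then show ?thesis using eqlow[of k "\<lambda>t. t"] F k unfolding aoi_feasible_def by auto
    next
      case False
      then have "k = N" using k by auto
      then show ?thesis using sN[of "\<lambda>t. t"] pre by simp
    qed
  next
    fix i assume i: "i \<in> {2..N}"
    show "y i \<ge> 2 * d"
    proof (cases "i = N")
      case True then show ?thesis using i a2 by (simp add: y_def)
    next
      case False then show ?thesis using i F unfolding aoi_feasible_def by (auto simp: y_def)
    qed
  next
    show "y (N+1) \<ge> d" using bd by (simp add: y_def)
  next
    show "(\<Sum>i=1..N+1. y i) = T + real N * d"
      using sM[of "\<lambda>t. t"] sMx[of "\<lambda>t. t"] ab F unfolding aoi_feasible_def by simp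
  qed
  moreover have "aoi_objective N y = aoi_objective N x - (x N)\<^sup>2 - (x (N+1))\<^sup>2 + a\<^sup>2 + b\<^sup>2"
    unfolding aoi_objective_def using sM[of "\<lambda>t. t\<^sup>2"] sMx[of "\<lambda>t. t\<^sup>2"] by simp
  ultimately show ?thesis by (simp add: y_def)
qed

theorem lemma3:
  fixes N :: nat and d T :: real and s xs :: "nat \<Rightarrow> real"
  assumes "N \<ge> 1" and "d > 0" and "T > 0"
    and "0 \<le> s 1" and "\<And>i j. 1 \<le> i \<Longrightarrow> i \<le> j \<Longrightarrow> j \<le> N \<Longrightarrow> s i \<le> s j"
    and "aoi_optimal N d T s xs"
  shows "xs N \<ge> xs (N + 1) \<and>
         (xs N > xs (N + 1) \<longrightarrow>
            (\<Sum>i=1..N. xs i) = s N + real N * d \<or> xs N = 2 * d)"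
proof -
  have F: "aoi_feasible N d T s xs" and opt: "\<And>y. aoi_feasible N d T s y \<Longrightarrow> aoi_objective N xs \<le> aoi_objective N y"
    using assms(6) unfolding aoi_optimal_def by auto
  have last: "(\<Sum>i=1..N. xs i) = (\<Sum>i=1..N-1. xs i) + xs N"
    using sum_last[OF assms(1)] by blast
  have pN: "(\<Sum>i=1..N. xs i) \<ge> s N + real N * d" using F assms(1) unfolding aoi_feasible_def by auto
  have xNd: "xs N \<ge> d"
  proof (cases "N \<ge> 2")
    case True
    then have "xs N \<ge> 2 * d" using F unfolding aoi_feasible_def by auto
    then show ?thesis using assms(2) by linarith
  next
    case False then have "N = 1" using assms(1) by auto
    then show ?thesis using pN assms(4) by simp
  qed
  have xMd: "xs (N+1) \<ge> d" using F unfolding aoi_feasible_def by auto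
  have x2: "N \<ge> 2 \<longrightarrow> xs N \<ge> 2 * d" using F unfolding aoi_feasible_def by auto
  have part1: "xs N \<ge> xs (N + 1)"
  proof (rule ccontr)
    assume H: "\<not> ?thesis"
    define c where "c = (xs N + xs (N+1)) / 2"
    have P: "aoi_feasible N d T s (xs(N:=c, N+1:=c)) \<and>
         aoi_objective N (xs(N:=c, N+1:=c)) = aoi_objective N xs - (xs N)\<^sup>2 - (xs (N+1))\<^sup>2 + c\<^sup>2 + c\<^sup>2"
      apply (rule perturb[OF assms(1) F])
      using H xNd xMd x2 pN last
      by (auto simp: c_def) (auto simp: field_simps)
    have "c\<^sup>2 + c\<^sup>2 < (xs N)\<^sup>2 + (xs (N+1))\<^sup>2"
    proof -
      have "(xs N)\<^sup>2 + (xs (N+1))\<^sup>2 - (c\<^sup>2 + c\<^sup>2) = (xs N - xs (N+1))\<^sup>2 / 2"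
        by (simp add: c_def power2_eq_square field_simps)
      moreover have "(xs N - xs (N+1))\<^sup>2 > 0" using H by simp
      ultimately show ?thesis by linarith
    qed
    then show False using P opt[of "xs(N:=c, N+1:=c)"] by linarith
  qed
  have part2: "(\<Sum>i=1..N. xs i) = s N + real N * d \<or> xs N = 2 * d" if G: "xs N > xs (N+1)"
  proof (rule ccontr)
    assume H: "\<not> ?thesis"
    define t where "t = min (min ((xs N - xs (N+1)) / 2) ((\<Sum>i=1..N. xs i) - (s N + real N * d))) \<bar>xs N - 2 * d\<bar>"
    have tpos: "t > 0" using H G pN by (auto simp: t_def)
    have th: "t \<le> (xs N - xs (N+1)) / 2" unfolding t_def by linarith
    have ts: "t \<le> (\<Sum>i=1..N. xs i) - (s N + real N * d)" unfolding t_def by linarith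
    have ta: "t \<le> \<bar>xs N - 2 * d\<bar>" unfolding t_def by linarith
    have P: "aoi_feasible N d T s (xs(N:=xs N - t, N+1:=xs (N+1) + t)) \<and>
         aoi_objective N (xs(N:=xs N - t, N+1:=xs (N+1) + t)) = aoi_objective N xs - (xs N)\<^sup>2 - (xs (N+1))\<^sup>2 + (xs N - t)\<^sup>2 + (xs (N+1) + t)\<^sup>2"
      apply (rule perturb[OF assms(1) F])
      using tpos th ts ta xMd x2 pN last by auto
    have "(xs N - t)\<^sup>2 + (xs (N+1) + t)\<^sup>2 - (xs N)\<^sup>2 - (xs (N+1))\<^sup>2 = 2 * t * (t - (xs N - xs (N+1)))"
      by (simp add: power2_eq_square algebra_simps)
    moreover have "2 * t * (t - (xs N - xs (N+1))) < 0"
      using tpos th G by (intro mult_pos_neg) auto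
    ultimately show False using P opt[of "xs(N:=xs N - t, N+1:=xs (N+1) + t)"] by linarith
  qed
  show ?thesis using part1 part2 by blast
qed

end
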